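(* Let the setting, algorithm and notation be as described in the context. Assume $\tau\in(0,(1+\sqrt5)/2)$ and that for some $\alpha\in(\tau/\min(1+\tau,1+\tau^{-1}),1]$, \[ \widehat\Sigma_f+S\succeq0,\quad H_f\succeq0,\quad \tfrac12\widehat\Sigma_g+T\succeq0,\quad M_g\succ0 . \] For $k\ge1$ let $\hat x^k:=\frac1k\sum_{i=1}^k x^{i+1}$, $\hat y^k:=\frac1k\sum_{i=1}^k y^{i+1}$, $\hat z^k:=\frac1k\sum_{i=1}^k\tilde z^{i+1}$. Then for every $k\ge1$ and every $(x,y,z)\in\mathcal X\times\mathcal Y\times\mathcal Z$, \[ \big(p(\hat x^k)+q(\hat y^k)\big)-\big(p(x)+q(y)\big)+\langle\hat x^k-x,\nabla f(x)+Az\rangle+\langle\hat y^k-y,\nabla g(y)+Bz\rangle+\langle\hat z^k-z,-(A^*x+B^*y-c)\rangle\le\frac{\phi_1(x,y,z)+\big(1-\alpha\min(\tau,\tau^{-1})\big)\sigma\|r^1\|^2+\alpha\xi_1}{2k}. \]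
   Context: Let $\mathcal X,\mathcal Y,\mathcal Z$ be finite-dimensional real Euclidean spaces with inner products $\langle\cdot,\cdot\rangle$ and induced norms $\|\cdot\|$. Let $p:\mathcal X\to(-\infty,+\infty]$ and $q:\mathcal Y\to(-\infty,+\infty]$ be closed proper convex functions, and let $f:\mathcal X\to\mathbb R$, $g:\mathcal Y\to\mathbb R$ be convex differentiable functions with Lipschitz continuous gradients. Let $A:\mathcal Z\to\mathcal X$, $B:\mathcal Z\to\mathcal Y$ be linear maps with adjoints $A^*,B^*$, and $c\in\mathcal Z$. Let $\Sigma_f,\widehat\Sigma_f$ (on $\mathcal X$) and $\Sigma_g,\widehat\Sigma_g$ (on $\mathcal Y$) be self-adjoint positive semidefinite linear operators with $\widehat\Sigma_f\succeq\Sigma_f$, $\widehat\Sigma_g\succeq\Sigma_g$, such that for all $x,x'\in\mathcal X$, $y,y'\in\mathcal Y$: $f(x')+\langle x-x',\nabla f(x')\rangle+\frac12\|x-x'\|^2_{\Sigma_f}\le f(x)\le f(x')+\langle x-x',\nabla f(x')\rangle+\frac12\|x-x'\|^2_{\widehat\Sigma_f}$ and the analogous two inequalities for $g$ with $\Sigma_g,\widehat\Sigma_g$. For a self-adjoint (possibly indefinite) operator $G$, $\|u\|_G^2:=\langle u,Gu\rangle$. Algorithm (Majorized iPADMM): let $\sigma>0$, $\tau>0$, and let $S:\mathcal X\to\mathcal X$, $T:\mathcal Y\to\mathcal Y$ be self-adjoint, possibly indefinite, linear operators with $\widehat\Sigma_f+S+\sigma AA^*\succeq0$ and $\widehat\Sigma_g+T+\sigma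 BB^*\succeq0$. Starting from $(x^0,y^0,z^0)\in\mathrm{dom}(p)\times\mathrm{dom}(q)\times\mathcal Z$, for $k=0,1,\dots$: $x^{k+1}\in\arg\min_{x}\{p(x)+\langle\nabla f(x^k),x\rangle+\frac12\|x-x^k\|^2_{\widehat\Sigma_f+S}+\langle z^k,A^*x\rangle+\frac\sigma2\|A^*x+B^*y^k-c\|^2\}$, $y^{k+1}\in\arg\min_{y}\{q(y)+\langle\nabla g(y^k),y\rangle+\frac12\|y-y^k\|^2_{\widehat\Sigma_g+T}+\langle z^k,B^*y\rangle+\frac\sigma2\|A^*x^{k+1}+B^*y-c\|^2\}$, $z^{k+1}=z^k+\tau\sigma(A^*x^{k+1}+B^*y^{k+1}-c)$ (the minimizers are assumed to exist). Notation: $r^k:=A^*x^k+B^*y^k-c$, $\tilde z^{k+1}:=z^k+\sigma r^{k+1}$; for $\alpha\in(0,1]$, $H_f:=\frac12\Sigma_f+S+\frac12(1-\alpha)\sigma AA^*$ and $M_g:=\frac12\Sigma_g+T+\min(\tau,1+\tau-\tau^2)\alpha\sigma BB^*$; $\phi_1(x,y,z):=(\tau\sigma)^{-1}\|z^1-z\|^2+\|x^1-x\|^2_{\widehat\Sigma_f+S}+\|y^1-y\|^2_{\widehat\Sigma_g+T}+\sigma\|A^*x+B^*y^1-c\|^2$; $\xi_1:=\|y^1-y^0\|^2_{\widehat\Sigma_g+T}$. *)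

theory Defs
  imports "HOL-Analysis.Analysis"
begin

definition ereal_convex :: "('a::real_vector \<Rightarrow> ereal) \<Rightarrow> bool" where
  "ereal_convex p \<longleftrightarrow>
     (\<forall>u v (t::real). 0 \<le> t \<and> t \<le> 1 \<longrightarrow>
        p ((1 - t) *\<^sub>R u + t *\<^sub>R v) \<le> ereal (1 - t) * p u + ereal t * p v)"

definition proper_fun :: "('a \<Rightarrow> ereal) \<Rightarrow> bool" where
  "proper_fun p \<longleftrightarrow> (\<forall>u. p u \<noteq> -\<infinity>) \<and> (\<exists>u. p u \<noteq> \<infinity>)"

definition closed_fun :: "('a::topological_space \<Rightarrow> ereal) \<Rightarrow> bool" where
  "closed_fun p \<longleftrightarrow> closed {(u, t::real). p u \<le> ereal t}"

definition closed_proper_convex :: "('a::real_normed_vector \<Rightarrow> ereal) \<Rightarrow> bool" where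
  "closed_proper_convex p \<longleftrightarrow> closed_fun p \<and> proper_fun p \<and> ereal_convex p"

definition self_adjoint :: "('a::real_inner \<Rightarrow> 'a) \<Rightarrow> bool" where
  "self_adjoint G \<longleftrightarrow> linear G \<and> (\<forall>u v. inner (G u) v = inner u (G v))"

definition qf :: "('a::real_inner \<Rightarrow> 'a) \<Rightarrow> 'a \<Rightarrow> real" where
  "qf G u = inner u (G u)"

definition psd :: "('a::real_inner \<Rightarrow> 'a) \<Rightarrow> bool" where
  "psd G \<longleftrightarrow> (\<forall>u. 0 \<le> qf G u)"

definition pd :: "('a::real_inner \<Rightarrow> 'a) \<Rightarrow> bool" where
  "pd G \<longleftrightarrow> (\<forall>u. u \<noteq> 0 \<longrightarrow> 0 < qf G u)"

definition smooth_convex :: "('a::euclidean_space \<Rightarrow> real) \<Rightarrow> ('a \<Rightarrow> 'a) \<Rightarrow> bool" where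
  "smooth_convex f df \<longleftrightarrow> convex_on UNIV f \<and>
     (\<forall>u. (f has_derivative (\<lambda>h. inner (df u) h)) (at u)) \<and>
     (\<exists>L. \<forall>u v. norm (df u - df v) \<le> L * norm (u - v))"

definition sandwich :: "('a::real_inner \<Rightarrow> real) \<Rightarrow> ('a \<Rightarrow> 'a) \<Rightarrow> ('a \<Rightarrow> 'a) \<Rightarrow> ('a \<Rightarrow> 'a) \<Rightarrow> bool" where
  "sandwich f df Sig Sighat \<longleftrightarrow>
     self_adjoint Sig \<and> self_adjoint Sighat \<and> psd Sig \<and> psd (\<lambda>u. Sighat u - Sig u) \<and>
     (\<forall>u v. f v + inner (u - v) (df v) + qf Sig (u - v) / 2 \<le> f u \<and>
            f u \<le> f v + inner (u - v) (df v) + qf Sighat (u - v) / 2)"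

end

theory Submission
  imports Defs
begin



lemma qf_expand: "self_adjoint G \<Longrightarrow> qf G (a + t *\<^sub>R d) = qf G a + 2 * t * inner (G a) d + t^2 * qf G d"
proof -
  assume sa: "self_adjoint G"
  have l: "linear G" using sa by (simp add: self_adjoint_def)
  have s: "inner a (G d) = inner (G a) d" using sa by (simp add: self_adjoint_def)
  show ?thesis using s unfolding qf_def
    by (simp add: linear_add[OF l] linear_scale[OF l] inner_add_left inner_add_right
        inner_commute[of d "G a"] power2_eq_square algebra_simps)
qed

lemma h_expand:
  assumes sa: "self_adjoint G" and L: "linear L"
  shows "inner a (w + t *\<^sub>R d) + qf G (w + t *\<^sub>R d - v0) / 2 + inner zz (L (w + t *\<^sub>R d))
           + \<sigma> / 2 * (norm (L (w + t *\<^sub>R d) + e))\<^sup>2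
       = (inner a w + qf G (w - v0) / 2 + inner zz (L w) + \<sigma> / 2 * (norm (L w + e))\<^sup>2)
         + t * (inner a d + inner (G (w - v0)) d + inner zz (L d) + \<sigma> * inner (L w + e) (L d))
         + t^2 * (qf G d / 2 + \<sigma> / 2 * (norm (L d))\<^sup>2)"
proof -
  have q: "qf G (w + t *\<^sub>R d - v0) = qf G (w - v0) + 2 * t * inner (G (w - v0)) d + t^2 * qf G d"
    using qf_expand[OF sa, of "w - v0" t d] by (simp add: algebra_simps)
  have n: "(norm (L (w + t *\<^sub>R d) + e))\<^sup>2 = (norm (L w + e))\<^sup>2 + 2 * t * inner (L w + e) (L d) + t^2 * (norm (L d))\<^sup>2"
    unfolding power2_norm_eq_inner
    by (simp add: linear_add[OF L] linear_scale[OF L] inner_add_left inner_add_right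
        inner_commute power2_eq_square algebra_simps)
  show ?thesis unfolding q n
    by (simp add: linear_add[OF L] linear_scale[OF L] inner_add_right algebra_simps power2_eq_square)
qed



lemma small_t:
  fixes a Q :: real
  assumes "\<And>t. 0 < t \<Longrightarrow> t \<le> 1 \<Longrightarrow> a \<le> t * Q"
  shows "a \<le> 0"
proof (rule ccontr)
  assume "\<not> a \<le> 0"
  hence a: "a > 0" by simp
  define t where "t = min 1 (a / (2 * (\<bar>Q\<bar> + 1)))"
  have t0: "0 < t" using a by (simp add: t_def)
  have t1: "t \<le> 1" by (simp add: t_def)
  have "t * Q \<le> t * \<bar>Q\<bar>" using t0 by (simp add: mult_left_mono)
  also have "\<dots> \<le> a / (2 * (\<bar>Q\<bar> + 1)) * \<bar>Q\<bar>" by (rule mult_right_mono) (auto simp: t_def)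
  also have "\<dots> < a" proof -
    have h: "0 \<le> a * \<bar>Q\<bar>" using a by simp
    show ?thesis using a apply (simp add: field_simps) using h by linarith
  qed
  finally show False using assms[OF t0 t1] by simp
qed

lemma vi_from_min:
  fixes p :: "'a::real_vector \<Rightarrow> ereal"
  assumes cvx: "ereal_convex p" and pw: "p w = ereal Pw" and pu: "p u = ereal Pu"
    and mn: "\<And>v. p w + ereal (h w) \<le> p v + ereal (h v)"
    and ex: "\<And>t. h (w + t *\<^sub>R (u - w)) = h w + t * D + t^2 * Q"
  shows "Pw \<le> Pu + D"
proof -
  have "Pw - Pu - D \<le> t * Q" if t: "0 < t" "t \<le> 1" for t
  proof -
    have eqv: "(1 - t) *\<^sub>R w + t *\<^sub>R u = w + t *\<^sub>R (u - w)" by (simp add: algebra_simps)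
    have "p ((1 - t) *\<^sub>R w + t *\<^sub>R u) \<le> ereal (1 - t) * p w + ereal t * p u"
      using cvx t unfolding ereal_convex_def by auto
    hence c: "p (w + t *\<^sub>R (u - w)) \<le> ereal ((1 - t) * Pw + t * Pu)" using eqv pw pu by simp
    have "ereal (Pw + h w) \<le> p (w + t *\<^sub>R (u - w)) + ereal (h (w + t *\<^sub>R (u - w)))"
      using mn[of "w + t *\<^sub>R (u - w)"] pw by simp
    also have "\<dots> \<le> ereal ((1 - t) * Pw + t * Pu) + ereal (h (w + t *\<^sub>R (u - w)))"
      using c by (rule add_right_mono)
    finally have "Pw + h w \<le> (1 - t) * Pw + t * Pu + h w + t * D + t^2 * Q" by (simp add: ex)
    hence "t * (Pw - Pu - D) \<le> t * (t * Q)" by (simp add: algebra_simps power2_eq_square)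
    thus ?thesis using t by simp
  qed
  hence "Pw - Pu - D \<le> 0" by (rule small_t)
  thus ?thesis by simp
qed



lemma cocoer_h:
  assumes s: "sandwich g dg Sg Sgh"
  shows "0 \<le> inner (dg b - dg a) (b - a + 2 *\<^sub>R h) + qf Sgh h"
proof -
  have low: "\<And>u v. g v + inner (u - v) (dg v) \<le> g u"
  proof -
    fix u v
    have "0 \<le> qf Sg (u - v)" using s by (simp add: sandwich_def psd_def)
    moreover have "g v + inner (u - v) (dg v) + qf Sg (u - v) / 2 \<le> g u" using s by (simp add: sandwich_def)
    ultimately show "g v + inner (u - v) (dg v) \<le> g u" by linarith
  qed
  have up: "\<And>u v. g u \<le> g v + inner (u - v) (dg v) + qf Sgh (u - v) / 2" using s by (simp add: sandwich_def)
  have lin: "linear Sgh" using s by (simp add: sandwich_def self_adjoint_def)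
  have qn: "qf Sgh (- h) = qf Sgh h" by (simp add: qf_def linear_neg[OF lin])
  have 1: "g a + inner (b + h - a) (dg a) \<le> g (b + h)" by (rule low)
  have 2: "g (b + h) \<le> g b + inner h (dg b) + qf Sgh h / 2" using up[of "b + h" b] by simp
  have 3: "g b + inner (a - h - b) (dg b) \<le> g (a - h)" by (rule low)
  have 4: "g (a - h) \<le> g a + inner (- h) (dg a) + qf Sgh h / 2" using up[of "a - h" a] qn by simp
  show ?thesis using 1 2 3 4
    by (simp add: inner_diff_left inner_diff_right inner_add_left inner_add_right inner_commute algebra_simps)
qed

lemma cocoer:
  assumes s: "sandwich g dg Sg Sgh"
  shows "0 \<le> inner (dg b - dg a) (c - b) + qf Sgh (c - b - (b - a)) / 4"
proof -
  have lin: "linear Sgh" using s by (simp add: sandwich_def self_adjoint_def)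
  have e: "b - a + 2 *\<^sub>R ((1/2) *\<^sub>R (c - b - (b - a))) = c - b" by (simp add: algebra_simps)
  have q: "qf Sgh ((1/2) *\<^sub>R (c - b - (b - a))) = qf Sgh (c - b - (b - a)) / 4"
    by (simp add: qf_def linear_scale[OF lin])
  show ?thesis using cocoer_h[OF s, of b a "(1/2) *\<^sub>R (c - b - (b - a))"] unfolding e q .
qed

lemma chunkX:
  assumes s: "sandwich f df Sf Sfh" and S: "self_adjoint S"
    and VI: "P1 \<le> PU + (inner (df x0) (u - x1) + inner ((\<lambda>w. Sfh w + S w) (x1 - x0)) (u - x1) + Z)"
  shows "P1 - PU + inner (x1 - u) (df u) \<le>
     (qf (\<lambda>w. Sfh w + S w) (x0 - u) - qf (\<lambda>w. Sfh w + S w) (x1 - u)) / 2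
     - qf (\<lambda>w. (1/2) *\<^sub>R Sf w + S w) (x1 - x0) / 2 + Z"
proof -
  have up: "\<And>u v. f u \<le> f v + inner (u - v) (df v) + qf Sfh (u - v) / 2" using s by (simp add: sandwich_def)
  have lo: "\<And>u v. f v + inner (u - v) (df v) + qf Sf (u - v) / 2 \<le> f u" using s by (simp add: sandwich_def)
  have F1: "f x1 \<le> f x0 + inner (x1 - x0) (df x0) + qf Sfh (x1 - x0) / 2" by (rule up)
  have F2: "f x0 + inner (u - x0) (df x0) + qf Sf (u - x0) / 2 \<le> f u" by (rule lo)
  have F3: "f u + inner (x1 - u) (df u) + qf Sf (x1 - u) / 2 \<le> f x1" by (rule lo)
  have ps: "0 \<le> qf Sf ((x1 - u) - (u - x0))" using s by (simp add: sandwich_def psd_def)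
  have lSf: "linear Sf" and lSfh: "linear Sfh" and lS: "linear S"
    using s S by (auto simp: sandwich_def self_adjoint_def)
  obtain e1 e0 where x1: "x1 = u + e1" and x0: "x0 = u + e0"
  proof -
    show ?thesis by (rule that[of "x1 - u" "x0 - u"]) simp_all
  qed
  have sy1: "inner e1 (Sf e0) = inner e0 (Sf e1)" using s by (simp add: sandwich_def self_adjoint_def inner_commute)
  have sy2: "inner e1 (Sfh e0) = inner e0 (Sfh e1)" using s by (simp add: sandwich_def self_adjoint_def inner_commute)
  have sy3: "inner e1 (S e0) = inner e0 (S e1)" using S by (simp add: self_adjoint_def inner_commute)
  show ?thesis using F1 F2 F3 ps VI sy1 sy2 sy3 unfolding x1 x0 qf_def
    apply (simp add: linear_add[OF lSf] linear_diff[OF lSf] linear_add[OF lSfh] linear_diff[OF lSfh]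
        linear_add[OF lS] linear_diff[OF lS] linear_neg[OF lSf] linear_neg[OF lS] linear_neg[OF lSfh]
        linear_scale[OF lSf] inner_diff_left inner_diff_right inner_add_left inner_add_right inner_commute algebra_simps)
    by argo
qed

lemma step_vi:
  fixes p :: "'a::real_inner \<Rightarrow> ereal" and L :: "'a \<Rightarrow> 'c::real_inner"
  assumes cvx: "ereal_convex p" and sa: "self_adjoint G" and L: "linear L"
    and pw: "p w = ereal Pw" and pu: "p u = ereal Pu"
    and mn: "\<And>v. p w + ereal (inner a w + qf G (w - v0) / 2 + inner zz (L w) + \<sigma> / 2 * (norm (L w + e))\<^sup>2)
              \<le> p v + ereal (inner a v + qf G (v - v0) / 2 + inner zz (L v) + \<sigma> / 2 * (norm (L v + e))\<^sup>2)"
  shows "Pw \<le> Pu + (inner a (u - w) + inner (G (w - v0)) (u - w) + inner zz (L (u - w))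
                    + \<sigma> * inner (L w + e) (L (u - w)))"
proof -
  let ?h = "\<lambda>v. inner a v + qf G (v - v0) / 2 + inner zz (L v) + \<sigma> / 2 * (norm (L v + e))\<^sup>2"
  show ?thesis
  proof (rule vi_from_min[where h = ?h and Q = "qf G (u - w) / 2 + \<sigma> / 2 * (norm (L (u - w)))\<^sup>2"])
    show "ereal_convex p" by (rule cvx)
    show "p w = ereal Pw" by (rule pw)
    show "p u = ereal Pu" by (rule pu)
    show "\<And>v. p w + ereal (?h w) \<le> p v + ereal (?h v)" by (rule mn)
    show "\<And>t. ?h (w + t *\<^sub>R (u - w)) = ?h w + t * (inner a (u - w) + inner (G (w - v0)) (u - w) + inner zz (L (u - w))
                    + \<sigma> * inner (L w + e) (L (u - w))) + t\<^sup>2 * (qf G (u - w) / 2 + \<sigma> / 2 * (norm (L (u - w)))\<^sup>2)"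
      by (rule h_expand[OF sa L])
  qed
qed


lemma monoY:
  assumes s: "sandwich g dg Sg Sgh" and T: "self_adjoint T" and pT: "psd (\<lambda>v. (1/2) *\<^sub>R Sgh v + T v)"
    and H: "0 \<le> inner (dg y0) (y0 - y1) + inner ((\<lambda>w. Sgh w + T w) (y1 - y0)) (y0 - y1)
              + inner (dg ym) (y1 - y0) + inner ((\<lambda>w. Sgh w + T w) (y0 - ym)) (y1 - y0) + Zm"
  shows "- Zm \<le> (qf (\<lambda>w. Sgh w + T w) (y0 - ym) - qf (\<lambda>w. Sgh w + T w) (y1 - y0)) / 2"
proof -
  have co: "0 \<le> inner (dg y0 - dg ym) (y1 - y0) + qf Sgh (y1 - y0 - (y0 - ym)) / 4"
    by (rule cocoer[OF s])
  have ps: "0 \<le> qf (\<lambda>v. (1/2) *\<^sub>R Sgh v + T v) (y1 - y0 - (y0 - ym))"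
    using pT by (simp add: psd_def)
  have lG: "linear Sgh" using s by (simp add: sandwich_def self_adjoint_def)
  have lT: "linear T" using T by (simp add: self_adjoint_def)
  obtain d1 d0 where y1: "y1 = y0 + d1" and ym: "ym = y0 - d0"
  proof -
    show ?thesis by (rule that[of "y1 - y0" "y0 - ym"]) simp_all
  qed
  have sy1: "inner d1 (Sgh d0) = inner d0 (Sgh d1)" using s by (simp add: sandwich_def self_adjoint_def inner_commute)
  have sy2: "inner d1 (T d0) = inner d0 (T d1)" using T by (simp add: self_adjoint_def inner_commute)
  show ?thesis using co ps H sy1 sy2 unfolding y1 ym qf_def
    apply (simp add: linear_add[OF lG] linear_diff[OF lG] linear_add[OF lT] linear_diff[OF lT]
        linear_neg[OF lG] linear_neg[OF lT] linear_scale[OF lG]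
        inner_diff_left inner_diff_right inner_add_left inner_add_right inner_commute algebra_simps)
    by argo
qed



lemma z_norm_id:
  fixes z0 w R :: "'c::real_inner"
  assumes "\<tau> > 0" "\<sigma> > 0"
  shows "((norm (z0 - w))\<^sup>2 / (\<tau> * \<sigma>) - (norm (z0 + (\<tau> * \<sigma>) *\<^sub>R R - w))\<^sup>2 / (\<tau> * \<sigma>)) / 2
        = inner R (w - z0) - (\<tau> * \<sigma> / 2) * (norm R)\<^sup>2"
proof -
  have "(norm (z0 + (\<tau> * \<sigma>) *\<^sub>R R - w))\<^sup>2 = (norm (z0 - w))\<^sup>2 + 2 * (\<tau> * \<sigma>) * inner (z0 - w) R + (\<tau> * \<sigma>)^2 * (norm R)\<^sup>2"
    unfolding power2_norm_eq_inner
    by (simp add: inner_add_left inner_add_right inner_diff_left inner_diff_right inner_commute algebra_simps power2_eq_square)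
  then show ?thesis using assms
    by (simp add: field_simps power2_eq_square inner_diff_left inner_diff_right inner_commute)
qed

lemma z_id:
  fixes X1 X0 U Y1 Y0 V c z0 w :: "'c::real_inner"
  assumes "\<tau> > 0" "\<sigma> > 0"
  shows "inner (X1 - U) w + inner (Y1 - V) w + inner (z0 + \<sigma> *\<^sub>R (X1 + Y1 - c) - w) (- (U + V - c))
      + (inner z0 (U - X1) + \<sigma> * inner (X1 + (Y0 - c)) (U - X1))
      + (inner z0 (V - Y1) + \<sigma> * inner (Y1 + (X1 - c)) (V - Y1))
    = ((norm (z0 - w))\<^sup>2 / (\<tau> * \<sigma>) - (norm (z0 + (\<tau> * \<sigma>) *\<^sub>R (X1 + Y1 - c) - w))\<^sup>2 / (\<tau> * \<sigma>)) / 2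
      + ((\<tau> - 2) * \<sigma> / 2) * (norm (X1 + Y1 - c))\<^sup>2
      + (\<sigma> / 2) * ((norm (U + Y0 - c))\<^sup>2 - (norm (U + Y1 - c))\<^sup>2)
      - (\<sigma> / 2) * (norm (Y1 - Y0))\<^sup>2 + \<sigma> * inner (X1 + Y1 - c) (Y1 - Y0)"
  unfolding z_norm_id[OF assms]
  unfolding power2_norm_eq_inner
  apply (simp add: inner_add_left inner_add_right inner_diff_left inner_diff_right inner_commute algebra_simps)
  apply (simp add: field_simps)
  done

lemma z_mono:
  fixes X1 X0 Y1 Y0 c z0 zm :: "'c::real_inner"
  assumes z0: "z0 = zm + (\<tau> * \<sigma>) *\<^sub>R (X0 + Y0 - c)"
  shows "- (inner z0 (Y0 - Y1) + \<sigma> * inner (Y1 + (X1 - c)) (Y0 - Y1)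
           + inner zm (Y1 - Y0) + \<sigma> * inner (Y0 + (X0 - c)) (Y1 - Y0))
       = \<sigma> * inner (X1 + Y1 - c) (Y1 - Y0) + (\<tau> - 1) * \<sigma> * inner (X0 + Y0 - c) (Y1 - Y0)"
  unfolding z0
  by (simp add: inner_add_left inner_add_right inner_diff_left inner_diff_right inner_commute algebra_simps)



lemma scalar_ineq:
  fixes P Q b :: "'c::real_inner"
  assumes t0: "0 < \<tau>" and s0: "0 < \<sigma>" and a1: "\<alpha> \<le> 1"
    and a0: "\<tau> / min (1 + \<tau>) (1 + 1 / \<tau>) < \<alpha>"
  shows "((\<tau> - 2) * \<sigma> / 2) * (norm P)\<^sup>2 - (\<sigma> / 2) * (norm b)\<^sup>2 + \<sigma> * inner P b
        + ((1 - \<alpha>) * \<sigma> / 4) * (norm (P - Q - b))\<^sup>2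
        + (min \<tau> (1 + \<tau> - \<tau>\<^sup>2) * \<alpha> * \<sigma> / 2) * (norm b)\<^sup>2
      \<le> ((1 - \<alpha> * min \<tau> (1 / \<tau>)) * \<sigma> / 2) * ((norm Q)\<^sup>2 - (norm P)\<^sup>2)
        + \<alpha> * (\<sigma> * inner P b + (\<tau> - 1) * \<sigma> * inner Q b)"
proof (cases "\<tau> \<le> 1")
  case True
  have tt: "\<tau> * \<tau> \<le> 1" using True t0 by (simp add: mult_le_one)
  have m1: "min \<tau> (1 + \<tau> - \<tau>\<^sup>2) = \<tau>" using tt by (auto simp: min_def power2_eq_square)
  have m2: "min \<tau> (1 / \<tau>) = \<tau>" using True t0 tt by (auto simp: min_def field_simps)
  have m3: "min (1 + \<tau>) (1 + 1 / \<tau>) = 1 + \<tau>" using True t0 tt by (auto simp: min_def field_simps)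
  have al: "\<tau> < \<alpha> * (1 + \<tau>)" using a0 t0 unfolding m3 by (simp add: field_simps)
  have id: "((1 - \<alpha> * \<tau>) * \<sigma> / 2) * ((norm Q)\<^sup>2 - (norm P)\<^sup>2)
        + \<alpha> * (\<sigma> * inner P b + (\<tau> - 1) * \<sigma> * inner Q b)
      - (((\<tau> - 2) * \<sigma> / 2) * (norm P)\<^sup>2 - (\<sigma> / 2) * (norm b)\<^sup>2 + \<sigma> * inner P b
        + ((1 - \<alpha>) * \<sigma> / 4) * (norm (P - Q - b))\<^sup>2
        + (\<tau> * \<alpha> * \<sigma> / 2) * (norm b)\<^sup>2)
     = ((1 - \<alpha>) * \<sigma> / 4) * (norm (Q + P - b))\<^sup>2 + (\<alpha> * \<sigma> * (1 - \<tau>) / 2) * (norm (Q - b))\<^sup>2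
       + (\<sigma> / 2 * (\<alpha> * (1 + \<tau>) - \<tau>)) * (norm P)\<^sup>2"
    unfolding power2_norm_eq_inner
    apply (simp add: inner_add_left inner_add_right inner_diff_left inner_diff_right inner_commute algebra_simps)
    apply (simp add: field_simps)
    done
  have "0 \<le> ((1 - \<alpha>) * \<sigma> / 4) * (norm (Q + P - b))\<^sup>2" using a1 s0 by simp
  moreover have "0 \<le> (\<alpha> * \<sigma> * (1 - \<tau>) / 2) * (norm (Q - b))\<^sup>2"
  proof -
    have "0 < \<alpha> * (1 + \<tau>)" using al t0 by linarith
    hence "0 < \<alpha>" using t0 by (simp add: zero_less_mult_iff)
    thus ?thesis using True s0 by simp
  qed
  moreover have "0 \<le> (\<sigma> / 2 * (\<alpha> * (1 + \<tau>) - \<tau>)) * (norm P)\<^sup>2" using al s0 by simp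
  ultimately show ?thesis using id unfolding m1 m2 by argo
next
  case False
  have g1: "1 < \<tau>" using False by simp
  have tt: "1 < \<tau> * \<tau>" using less_1_mult[OF g1 g1] .
  have m1: "min \<tau> (1 + \<tau> - \<tau>\<^sup>2) = 1 + \<tau> - \<tau>\<^sup>2" using tt by (auto simp: min_def power2_eq_square)
  have m2: "min \<tau> (1 / \<tau>) = 1 / \<tau>" using tt t0 by (auto simp: min_def field_simps)
  have m3: "min (1 + \<tau>) (1 + 1 / \<tau>) = 1 + 1 / \<tau>" using tt t0 by (auto simp: min_def field_simps)
  have al: "\<tau> < \<alpha> * (1 + 1 / \<tau>)" using a0 t0 unfolding m3 by (simp add: field_simps)
  have id: "((1 - \<alpha> * (1 / \<tau>)) * \<sigma> / 2) * ((norm Q)\<^sup>2 - (norm P)\<^sup>2)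
        + \<alpha> * (\<sigma> * inner P b + (\<tau> - 1) * \<sigma> * inner Q b)
      - (((\<tau> - 2) * \<sigma> / 2) * (norm P)\<^sup>2 - (\<sigma> / 2) * (norm b)\<^sup>2 + \<sigma> * inner P b
        + ((1 - \<alpha>) * \<sigma> / 4) * (norm (P - Q - b))\<^sup>2
        + ((1 + \<tau> - \<tau>\<^sup>2) * \<alpha> * \<sigma> / 2) * (norm b)\<^sup>2)
     = ((1 - \<alpha>) * \<sigma> / 4) * (norm (Q + P - b))\<^sup>2 + (\<alpha> * \<sigma> * (\<tau> - 1) / (2 * \<tau>)) * (norm (Q + \<tau> *\<^sub>R b))\<^sup>2
       + (\<sigma> / 2 * (\<alpha> * (1 + 1 / \<tau>) - \<tau>)) * (norm P)\<^sup>2"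
    using t0
    unfolding power2_norm_eq_inner
    apply (simp add: inner_add_left inner_add_right inner_diff_left inner_diff_right inner_commute algebra_simps power2_eq_square)
    apply (simp add: field_simps)
    done
  have "0 \<le> ((1 - \<alpha>) * \<sigma> / 4) * (norm (Q + P - b))\<^sup>2" using a1 s0 by simp
  moreover have "0 \<le> (\<alpha> * \<sigma> * (\<tau> - 1) / (2 * \<tau>)) * (norm (Q + \<tau> *\<^sub>R b))\<^sup>2"
  proof -
    have "0 < \<alpha> * (1 + 1 / \<tau>)" using al t0 by linarith
    moreover have "0 < 1 + 1 / \<tau>" using t0 by (simp add: add_pos_pos)
    ultimately have "0 < \<alpha>" by (simp add: zero_less_mult_iff)
    thus ?thesis using False s0 t0 by simp
  qed
  moreover have "0 \<le> (\<sigma> / 2 * (\<alpha> * (1 + 1 / \<tau>) - \<tau>)) * (norm P)\<^sup>2" using al s0 by simp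
  ultimately show ?thesis using id unfolding m1 m2 by argo
qed



lemma jensen_avg:
  fixes p :: "'a::real_vector \<Rightarrow> ereal"
  assumes cvx: "ereal_convex p" and k: "k \<ge> 1"
    and fin: "\<And>i. i \<in> {1..k} \<Longrightarrow> p (w i) = ereal (a i)"
  shows "p ((1 / real k) *\<^sub>R (\<Sum>i=1..k. w i)) \<le> ereal ((1 / real k) * (\<Sum>i=1..k. a i))"
  using k fin
proof (induction k rule: nat_induct_at_least)
  case base
  then show ?case by simp
next
  case (Suc n)
  have IH: "p ((1 / real n) *\<^sub>R (\<Sum>i=1..n. w i)) \<le> ereal ((1 / real n) * (\<Sum>i=1..n. a i))"
    using Suc by auto
  define t where "t = 1 / real (Suc n)"
  have t0: "0 \<le> t" "t \<le> 1" using Suc(1) by (auto simp: t_def)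
  have e1: "(1 / real (Suc n)) *\<^sub>R (\<Sum>i=1..Suc n. w i)
      = (1 - t) *\<^sub>R ((1 / real n) *\<^sub>R (\<Sum>i=1..n. w i)) + t *\<^sub>R w (Suc n)"
    using Suc(1) by (simp add: t_def scaleR_add_right field_simps)
  have e2: "(1 / real (Suc n)) * (\<Sum>i=1..Suc n. a i)
      = (1 - t) * ((1 / real n) * (\<Sum>i=1..n. a i)) + t * a (Suc n)"
  proof -
    have n0: "real n > 0" using Suc(1) by simp
    have "(1 - t) * (1 / real n) = 1 / real (Suc n)" using n0 by (simp add: t_def field_simps)
    hence h: "(1 - t) * ((1 / real n) * (\<Sum>i=1..n. a i)) = (1 / real (Suc n)) * (\<Sum>i=1..n. a i)"
      by (metis mult.assoc)
    have sumS: "(\<Sum>i=1..Suc n. a i) = (\<Sum>i=1..n. a i) + a (Suc n)" by simp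
    have "(1 / real (Suc n)) * (\<Sum>i=1..Suc n. a i) = (1 / real (Suc n)) * (\<Sum>i=1..n. a i) + t * a (Suc n)"
      unfolding sumS t_def by (simp only: distrib_left)
    thus ?thesis using h by simp
  qed
  have last: "p (w (Suc n)) = ereal (a (Suc n))" using Suc by auto
  have "p ((1 / real (Suc n)) *\<^sub>R (\<Sum>i=1..Suc n. w i))
      \<le> ereal (1 - t) * p ((1 / real n) *\<^sub>R (\<Sum>i=1..n. w i)) + ereal t * p (w (Suc n))"
    unfolding e1 using cvx t0 unfolding ereal_convex_def by blast
  also have "\<dots> \<le> ereal (1 - t) * ereal ((1 / real n) * (\<Sum>i=1..n. a i)) + ereal t * p (w (Suc n))"
    by (intro add_right_mono ereal_mult_left_mono IH) (use t0 in simp)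
  also have "\<dots> = ereal ((1 / real (Suc n)) * (\<Sum>i=1..Suc n. a i))"
    unfolding e2 last by simp
  finally show ?case .
qed


lemma sa_add: "self_adjoint F \<Longrightarrow> self_adjoint G \<Longrightarrow> self_adjoint (\<lambda>u. F u + G u)"
  unfolding self_adjoint_def by (auto simp: linear_add inner_add_left inner_add_right intro: linear_compose_add)

lemma avg_inner:
  fixes a :: "nat \<Rightarrow> 'a::real_inner"
  assumes "k \<ge> 1"
  shows "inner ((1 / real k) *\<^sub>R (\<Sum>i=1..k. a i) - u) g = (1 / real k) * (\<Sum>i=1..k. inner (a i - u) g)"
  using assms by (simp add: inner_diff_left inner_sum_left sum_subtractf field_simps)



theorem lemma5p2:
  fixes p :: "'x::euclidean_space \<Rightarrow> ereal" and q :: "'y::euclidean_space \<Rightarrow> ereal"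
    and f :: "'x \<Rightarrow> real" and g :: "'y \<Rightarrow> real"
    and df :: "'x \<Rightarrow> 'x" and dg :: "'y \<Rightarrow> 'y"
    and A :: "'z::euclidean_space \<Rightarrow> 'x" and B :: "'z \<Rightarrow> 'y" and c :: 'z
    and Sf Sfh S :: "'x \<Rightarrow> 'x" and Sg Sgh T :: "'y \<Rightarrow> 'y"
    and \<sigma> \<tau> \<alpha> :: real
    and x :: "nat \<Rightarrow> 'x" and y :: "nat \<Rightarrow> 'y" and z :: "nat \<Rightarrow> 'z"
  assumes p: "closed_proper_convex p" and q: "closed_proper_convex q"
    and f: "smooth_convex f df" and g: "smooth_convex g dg"
    and fS: "sandwich f df Sf Sfh" and gS: "sandwich g dg Sg Sgh"
    and A: "linear A" and B: "linear B"
    and \<sigma>: "\<sigma> > 0" and \<tau>: "0 < \<tau>" "\<tau> < (1 + sqrt 5) / 2"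
    and S: "self_adjoint S" and T: "self_adjoint T"
    and SA: "psd (\<lambda>u. Sfh u + S u + \<sigma> *\<^sub>R A (adjoint A u))"
    and TB: "psd (\<lambda>v. Sgh v + T v + \<sigma> *\<^sub>R B (adjoint B v))"
    and x0: "p (x 0) \<noteq> \<infinity>" and y0: "q (y 0) \<noteq> \<infinity>"
    and xstep: "\<And>k u. p (x (Suc k)) + ereal (inner (df (x k)) (x (Suc k))
                  + qf (\<lambda>w. Sfh w + S w) (x (Suc k) - x k) / 2
                  + inner (z k) (adjoint A (x (Suc k)))
                  + \<sigma> / 2 * (norm (adjoint A (x (Suc k)) + adjoint B (y k) - c))\<^sup>2)
               \<le> p u + ereal (inner (df (x k)) u
                  + qf (\<lambda>w. Sfh w + S w) (u - x k) / 2
                  + inner (z k) (adjoint A u)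
                  + \<sigma> / 2 * (norm (adjoint A u + adjoint B (y k) - c))\<^sup>2)"
    and ystep: "\<And>k v. q (y (Suc k)) + ereal (inner (dg (y k)) (y (Suc k))
                  + qf (\<lambda>w. Sgh w + T w) (y (Suc k) - y k) / 2
                  + inner (z k) (adjoint B (y (Suc k)))
                  + \<sigma> / 2 * (norm (adjoint A (x (Suc k)) + adjoint B (y (Suc k)) - c))\<^sup>2)
               \<le> q v + ereal (inner (dg (y k)) v
                  + qf (\<lambda>w. Sgh w + T w) (v - y k) / 2
                  + inner (z k) (adjoint B v)
                  + \<sigma> / 2 * (norm (adjoint A (x (Suc k)) + adjoint B v - c))\<^sup>2)"
    and zstep: "\<And>k. z (Suc k) = z k + (\<tau> * \<sigma>) *\<^sub>R
                  (adjoint A (x (Suc k)) + adjoint B (y (Suc k)) - c)"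
    and \<alpha>: "\<tau> / min (1 + \<tau>) (1 + 1 / \<tau>) < \<alpha>" "\<alpha> \<le> 1"
    and Sfh_S: "psd (\<lambda>u. Sfh u + S u)"
    and Hf: "psd (\<lambda>u. (1/2) *\<^sub>R Sf u + S u + ((1 - \<alpha>) * \<sigma> / 2) *\<^sub>R A (adjoint A u))"
    and Sgh_T: "psd (\<lambda>v. (1/2) *\<^sub>R Sgh v + T v)"
    and Mg: "pd (\<lambda>v. (1/2) *\<^sub>R Sg v + T v
                + (min \<tau> (1 + \<tau> - \<tau>\<^sup>2) * \<alpha> * \<sigma>) *\<^sub>R B (adjoint B v))"
    and k: "k \<ge> (1::nat)"
  shows "let r = (\<lambda>j. adjoint A (x j) + adjoint B (y j) - c);
             zt = (\<lambda>j. z (j - 1) + \<sigma> *\<^sub>R r j);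
             xh = (1 / real k) *\<^sub>R (\<Sum>i=1..k. x (i + 1));
             yh = (1 / real k) *\<^sub>R (\<Sum>i=1..k. y (i + 1));
             zh = (1 / real k) *\<^sub>R (\<Sum>i=1..k. zt (i + 1));
             \<phi>1 = (\<lambda>u v w. (norm (z 1 - w))\<^sup>2 / (\<tau> * \<sigma>)
                      + qf (\<lambda>a. Sfh a + S a) (x 1 - u)
                      + qf (\<lambda>b. Sgh b + T b) (y 1 - v)
                      + \<sigma> * (norm (adjoint A u + adjoint B (y 1) - c))\<^sup>2);
             \<xi>1 = qf (\<lambda>b. Sgh b + T b) (y 1 - y 0)
         in \<forall>u v w.
              (p xh + q yh) - (p u + q v)
              + ereal (inner (xh - u) (df u + A w) + inner (yh - v) (dg v + B w)
                       + inner (zh - w) (- (adjoint A u + adjoint B v - c)))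
              \<le> ereal ((\<phi>1 u v w + (1 - \<alpha> * min \<tau> (1 / \<tau>)) * \<sigma> * (norm (r 1))\<^sup>2 + \<alpha> * \<xi>1)
                       / (2 * real k))"
proof -
  have lA: "linear (adjoint A)" by (rule adjoint_linear[OF A])
  have lB: "linear (adjoint B)" by (rule adjoint_linear[OF B])
  have pcvx: "ereal_convex p" and qcvx: "ereal_convex q"
    using p q by (auto simp: closed_proper_convex_def)
  have pnm: "\<And>a. p a \<noteq> -\<infinity>" and qnm: "\<And>a. q a \<noteq> -\<infinity>"
    using p q by (auto simp: closed_proper_convex_def proper_fun_def)
  have saSf: "self_adjoint Sf" and saSfh: "self_adjoint Sfh" and saSg: "self_adjoint Sg"
    and saSgh: "self_adjoint Sgh"
    using fS gS by (auto simp: sandwich_def)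
  have saPf: "self_adjoint (\<lambda>w. Sfh w + S w)" by (rule sa_add[OF saSfh S])
  have saPg: "self_adjoint (\<lambda>w. Sgh w + T w)" by (rule sa_add[OF saSgh T])
  obtain P0 where P0: "p (x 0) = ereal P0" using x0 pnm[of "x 0"] by (cases "p (x 0)") auto
  obtain Q0 where Q0: "q (y 0) = ereal Q0" using y0 qnm[of "y 0"] by (cases "q (y 0)") auto
  have pxS: "p (x (Suc k)) \<noteq> \<infinity>" for k
  proof
    assume h: "p (x (Suc k)) = \<infinity>"
    from xstep[of k "x 0"] show False unfolding h P0 by simp
  qed
  have qyS: "q (y (Suc k)) \<noteq> \<infinity>" for k
  proof
    assume h: "q (y (Suc k)) = \<infinity>"
    from ystep[of k "y 0"] show False unfolding h Q0 by simp
  qed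
  define px where "px = (\<lambda>k. real_of_ereal (p (x k)))"
  define qy where "qy = (\<lambda>k. real_of_ereal (q (y k)))"
  have px: "p (x k) = ereal (px k)" for k
  proof (cases k)
    case 0 then show ?thesis using P0 by (simp add: px_def)
  next
    case (Suc j) then show ?thesis using pxS[of j] pnm[of "x (Suc j)"]
      by (cases "p (x (Suc j))") (auto simp: px_def)
  qed
  have qy: "q (y k) = ereal (qy k)" for k
  proof (cases k)
    case 0 then show ?thesis using Q0 by (simp add: qy_def)
  next
    case (Suc j) then show ?thesis using qyS[of j] qnm[of "y (Suc j)"]
      by (cases "q (y (Suc j))") (auto simp: qy_def)
  qed
  have VIx: "px (Suc k) \<le> Pa + (inner (df (x k)) (a - x (Suc k))
      + inner ((\<lambda>w. Sfh w + S w) (x (Suc k) - x k)) (a - x (Suc k))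
      + inner (z k) (adjoint A (a - x (Suc k)))
      + \<sigma> * inner (adjoint A (x (Suc k)) + (adjoint B (y k) - c)) (adjoint A (a - x (Suc k))))"
    if pa: "p a = ereal Pa" for k a Pa
  proof (rule step_vi[OF pcvx saPf lA px pa])
    fix v
    show "p (x (Suc k)) + ereal (inner (df (x k)) (x (Suc k)) + qf (\<lambda>w. Sfh w + S w) (x (Suc k) - x k) / 2
        + inner (z k) (adjoint A (x (Suc k))) + \<sigma> / 2 * (norm (adjoint A (x (Suc k)) + (adjoint B (y k) - c)))\<^sup>2)
      \<le> p v + ereal (inner (df (x k)) v + qf (\<lambda>w. Sfh w + S w) (v - x k) / 2
        + inner (z k) (adjoint A v) + \<sigma> / 2 * (norm (adjoint A v + (adjoint B (y k) - c)))\<^sup>2)"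
      unfolding add_diff_eq by (rule xstep)
  qed
  have eqy: "\<And>a b. b + (a - c) = a + b - c" by (simp add: algebra_simps)
  have VIy: "qy (Suc k) \<le> Qb + (inner (dg (y k)) (b - y (Suc k))
      + inner ((\<lambda>w. Sgh w + T w) (y (Suc k) - y k)) (b - y (Suc k))
      + inner (z k) (adjoint B (b - y (Suc k)))
      + \<sigma> * inner (adjoint B (y (Suc k)) + (adjoint A (x (Suc k)) - c)) (adjoint B (b - y (Suc k))))"
    if qb: "q b = ereal Qb" for k b Qb
  proof (rule step_vi[OF qcvx saPg lB qy qb])
    fix v
    show "q (y (Suc k)) + ereal (inner (dg (y k)) (y (Suc k)) + qf (\<lambda>w. Sgh w + T w) (y (Suc k) - y k) / 2
        + inner (z k) (adjoint B (y (Suc k))) + \<sigma> / 2 * (norm (adjoint B (y (Suc k)) + (adjoint A (x (Suc k)) - c)))\<^sup>2)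
      \<le> q v + ereal (inner (dg (y k)) v + qf (\<lambda>w. Sgh w + T w) (v - y k) / 2
        + inner (z k) (adjoint B v) + \<sigma> / 2 * (norm (adjoint B v + (adjoint A (x (Suc k)) - c)))\<^sup>2)"
      unfolding eqy by (rule ystep)
  qed

  have main: "(p ((1 / real k) *\<^sub>R (\<Sum>i=1..k. x (i + 1))) + q ((1 / real k) *\<^sub>R (\<Sum>i=1..k. y (i + 1)))) - (p u + q v)
      + ereal (inner ((1 / real k) *\<^sub>R (\<Sum>i=1..k. x (i + 1)) - u) (df u + A w)
             + inner ((1 / real k) *\<^sub>R (\<Sum>i=1..k. y (i + 1)) - v) (dg v + B w)
             + inner ((1 / real k) *\<^sub>R (\<Sum>i=1..k. (z (i + 1 - 1) + \<sigma> *\<^sub>R (adjoint A (x (i + 1)) + adjoint B (y (i + 1)) - c))) - w)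
                 (- (adjoint A u + adjoint B v - c)))
      \<le> ereal ((((norm (z 1 - w))\<^sup>2 / (\<tau> * \<sigma>) + qf (\<lambda>a. Sfh a + S a) (x 1 - u)
                 + qf (\<lambda>b. Sgh b + T b) (y 1 - v) + \<sigma> * (norm (adjoint A u + adjoint B (y 1) - c))\<^sup>2)
               + (1 - \<alpha> * min \<tau> (1 / \<tau>)) * \<sigma> * (norm (adjoint A (x 1) + adjoint B (y 1) - c))\<^sup>2
               + \<alpha> * qf (\<lambda>b. Sgh b + T b) (y 1 - y 0)) / (2 * real k))" for u v w
  proof (cases "p u = \<infinity> \<or> q v = \<infinity>")
    case True
    have jx: "p ((1 / real k) *\<^sub>R (\<Sum>i=1..k. x (i + 1))) \<le> ereal ((1 / real k) * (\<Sum>i=1..k. px (i + 1)))"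
      by (rule jensen_avg[OF pcvx k]) (rule px)
    have jy: "q ((1 / real k) *\<^sub>R (\<Sum>i=1..k. y (i + 1))) \<le> ereal ((1 / real k) * (\<Sum>i=1..k. qy (i + 1)))"
      by (rule jensen_avg[OF qcvx k]) (rule qy)
    obtain PX where PX: "p ((1 / real k) *\<^sub>R (\<Sum>i=1..k. x (i + 1))) = ereal PX"
      using jx pnm[of "(1 / real k) *\<^sub>R (\<Sum>i=1..k. x (i + 1))"]
      by (cases "p ((1 / real k) *\<^sub>R (\<Sum>i=1..k. x (i + 1)))") auto
    obtain QY where QY: "q ((1 / real k) *\<^sub>R (\<Sum>i=1..k. y (i + 1))) = ereal QY"
      using jy qnm[of "(1 / real k) *\<^sub>R (\<Sum>i=1..k. y (i + 1))"]
      by (cases "q ((1 / real k) *\<^sub>R (\<Sum>i=1..k. y (i + 1)))") auto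
    have inf: "p u + q v = \<infinity>" using True pnm[of u] qnm[of v] by auto
    show ?thesis unfolding PX QY inf by simp
  next
    case False
    obtain Pu where Pu: "p u = ereal Pu" using False pnm[of u] by (cases "p u") auto
    obtain Qv where Qv: "q v = ereal Qv" using False qnm[of v] by (cases "q v") auto
    define cc where "cc = 1 - \<alpha> * min \<tau> (1 / \<tau>)"
    define \<Phi> where "\<Phi> = (\<lambda>i. (norm (z i - w))\<^sup>2 / (\<tau> * \<sigma>) + qf (\<lambda>a. Sfh a + S a) (x i - u)
                 + qf (\<lambda>b. Sgh b + T b) (y i - v) + \<sigma> * (norm (adjoint A u + adjoint B (y i) - c))\<^sup>2)"
    define \<xi> where "\<xi> = (\<lambda>i. qf (\<lambda>b. Sgh b + T b) (y i - y (i - 1)))"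
    define \<Psi> where "\<Psi> = (\<lambda>i. \<Phi> i + \<alpha> * \<xi> i + cc * \<sigma> * (norm (adjoint A (x i) + adjoint B (y i) - c))\<^sup>2)"
    define LH where "LH = (\<lambda>i. (px (i + 1) - Pu) + (qy (i + 1) - Qv)
        + (inner (x (i + 1) - u) (df u + A w) + inner (y (i + 1) - v) (dg v + B w)
           + inner (z (i + 1 - 1) + \<sigma> *\<^sub>R (adjoint A (x (i + 1)) + adjoint B (y (i + 1)) - c) - w)
                 (- (adjoint A u + adjoint B v - c))))"
    have step: "LH (Suc j) \<le> (\<Psi> (Suc j) - \<Psi> (Suc (Suc j))) / 2" for j
    proof -
      let ?x0 = "x (Suc j)" and ?x1 = "x (Suc (Suc j))" and ?ym = "y j" and ?y0 = "y (Suc j)"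
        and ?y1 = "y (Suc (Suc j))" and ?zm = "z j" and ?z0 = "z (Suc j)"
      let ?X0 = "adjoint A ?x0" and ?X1 = "adjoint A ?x1" and ?U = "adjoint A u"
        and ?Y0 = "adjoint B ?y0" and ?Y1 = "adjoint B ?y1" and ?V = "adjoint B v"
      let ?Zx = "inner ?z0 (?U - ?X1) + \<sigma> * inner (?X1 + (?Y0 - c)) (?U - ?X1)"
      let ?Zy = "inner ?z0 (?V - ?Y1) + \<sigma> * inner (?Y1 + (?X1 - c)) (?V - ?Y1)"
      have vx: "px (Suc (Suc j)) \<le> Pu + (inner (df ?x0) (u - ?x1) + inner ((\<lambda>w. Sfh w + S w) (?x1 - ?x0)) (u - ?x1) + ?Zx)"
        using VIx[OF Pu, of "Suc j"] by (simp only: add.assoc linear_diff[OF lA])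
      have cx: "px (Suc (Suc j)) - Pu + inner (?x1 - u) (df u) \<le>
         (qf (\<lambda>w. Sfh w + S w) (?x0 - u) - qf (\<lambda>w. Sfh w + S w) (?x1 - u)) / 2
         - qf (\<lambda>w. (1/2) *\<^sub>R Sf w + S w) (?x1 - ?x0) / 2 + ?Zx"
        by (rule chunkX[OF fS S vx])
      have vy: "qy (Suc (Suc j)) \<le> Qv + (inner (dg ?y0) (v - ?y1) + inner ((\<lambda>w. Sgh w + T w) (?y1 - ?y0)) (v - ?y1) + ?Zy)"
        using VIy[OF Qv, of "Suc j"] by (simp only: add.assoc linear_diff[OF lB])
      have cy: "qy (Suc (Suc j)) - Qv + inner (?y1 - v) (dg v) \<le>
         (qf (\<lambda>w. Sgh w + T w) (?y0 - v) - qf (\<lambda>w. Sgh w + T w) (?y1 - v)) / 2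
         - qf (\<lambda>w. (1/2) *\<^sub>R Sg w + T w) (?y1 - ?y0) / 2 + ?Zy"
        by (rule chunkX[OF gS T vy])
      have zs: "z (Suc (Suc j)) = ?z0 + (\<tau> * \<sigma>) *\<^sub>R (?X1 + ?Y1 - c)" by (rule zstep)
      have zid: "inner (?X1 - ?U) w + inner (?Y1 - ?V) w + inner (?z0 + \<sigma> *\<^sub>R (?X1 + ?Y1 - c) - w) (- (?U + ?V - c))
          + ?Zx + ?Zy
        = ((norm (?z0 - w))\<^sup>2 / (\<tau> * \<sigma>) - (norm (?z0 + (\<tau> * \<sigma>) *\<^sub>R (?X1 + ?Y1 - c) - w))\<^sup>2 / (\<tau> * \<sigma>)) / 2
          + ((\<tau> - 2) * \<sigma> / 2) * (norm (?X1 + ?Y1 - c))\<^sup>2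
          + (\<sigma> / 2) * ((norm (?U + ?Y0 - c))\<^sup>2 - (norm (?U + ?Y1 - c))\<^sup>2)
          - (\<sigma> / 2) * (norm (?Y1 - ?Y0))\<^sup>2 + \<sigma> * inner (?X1 + ?Y1 - c) (?Y1 - ?Y0)"
        by (rule z_id[OF \<tau>(1) \<sigma>])
      have hf0: "0 \<le> qf (\<lambda>u. (1/2) *\<^sub>R Sf u + S u + ((1 - \<alpha>) * \<sigma> / 2) *\<^sub>R A (adjoint A u)) (?x1 - ?x0)"
        using Hf by (simp add: psd_def)
      have hfe: "qf (\<lambda>u. (1/2) *\<^sub>R Sf u + S u + ((1 - \<alpha>) * \<sigma> / 2) *\<^sub>R A (adjoint A u)) d
          = qf (\<lambda>w. (1/2) *\<^sub>R Sf w + S w) d + ((1 - \<alpha>) * \<sigma> / 2) * (norm (adjoint A d))\<^sup>2" for d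
        unfolding qf_def power2_norm_eq_inner
        by (simp add: inner_add_right adjoint_clauses(2)[OF A, symmetric])
      have hf: "- qf (\<lambda>w. (1/2) *\<^sub>R Sf w + S w) (?x1 - ?x0) / 2 \<le> ((1 - \<alpha>) * \<sigma> / 4) * (norm (?X1 - ?X0))\<^sup>2"
        using hf0 unfolding hfe linear_diff[OF lA] by simp
      have mg0: "0 \<le> qf (\<lambda>v. (1/2) *\<^sub>R Sg v + T v
                + (min \<tau> (1 + \<tau> - \<tau>\<^sup>2) * \<alpha> * \<sigma>) *\<^sub>R B (adjoint B v)) (?y1 - ?y0)"
      proof (cases "?y1 - ?y0 = 0")
        case True then show ?thesis by (simp add: qf_def)
      next
        case False then show ?thesis using Mg by (simp add: pd_def less_imp_le)
      qed
      have mge: "qf (\<lambda>v. (1/2) *\<^sub>R Sg v + T v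
                + (min \<tau> (1 + \<tau> - \<tau>\<^sup>2) * \<alpha> * \<sigma>) *\<^sub>R B (adjoint B v)) d
          = qf (\<lambda>w. (1/2) *\<^sub>R Sg w + T w) d + (min \<tau> (1 + \<tau> - \<tau>\<^sup>2) * \<alpha> * \<sigma>) * (norm (adjoint B d))\<^sup>2" for d
        unfolding qf_def power2_norm_eq_inner
        by (simp add: inner_add_right adjoint_clauses(2)[OF B, symmetric])
      have mg: "- qf (\<lambda>w. (1/2) *\<^sub>R Sg w + T w) (?y1 - ?y0) / 2 \<le> (min \<tau> (1 + \<tau> - \<tau>\<^sup>2) * \<alpha> * \<sigma> / 2) * (norm (?Y1 - ?Y0))\<^sup>2"
        using mg0 unfolding mge linear_diff[OF lB] by simp
      let ?Zm = "inner ?z0 (?Y0 - ?Y1) + \<sigma> * inner (?Y1 + (?X1 - c)) (?Y0 - ?Y1)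
           + inner ?zm (?Y1 - ?Y0) + \<sigma> * inner (?Y0 + (?X0 - c)) (?Y1 - ?Y0)"
      have vy1: "qy (Suc j) \<le> qy (Suc (Suc j)) + (inner (dg ?ym) (?y1 - ?y0)
          + inner ((\<lambda>w. Sgh w + T w) (?y0 - ?ym)) (?y1 - ?y0)
          + inner ?zm (?Y1 - ?Y0) + \<sigma> * inner (?Y0 + (?X0 - c)) (?Y1 - ?Y0))"
        using VIy[OF qy[of "Suc (Suc j)"], of j] by (simp only: linear_diff[OF lB])
      have vy2: "qy (Suc (Suc j)) \<le> qy (Suc j) + (inner (dg ?y0) (?y0 - ?y1)
          + inner ((\<lambda>w. Sgh w + T w) (?y1 - ?y0)) (?y0 - ?y1)
          + inner ?z0 (?Y0 - ?Y1) + \<sigma> * inner (?Y1 + (?X1 - c)) (?Y0 - ?Y1))"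
        using VIy[OF qy[of "Suc j"], of "Suc j"] by (simp only: linear_diff[OF lB])
      have H: "0 \<le> inner (dg ?y0) (?y0 - ?y1) + inner ((\<lambda>w. Sgh w + T w) (?y1 - ?y0)) (?y0 - ?y1)
              + inner (dg ?ym) (?y1 - ?y0) + inner ((\<lambda>w. Sgh w + T w) (?y0 - ?ym)) (?y1 - ?y0) + ?Zm"
        using vy1 vy2 by argo
      have mono: "- ?Zm \<le> (qf (\<lambda>w. Sgh w + T w) (?y0 - ?ym) - qf (\<lambda>w. Sgh w + T w) (?y1 - ?y0)) / 2"
        by (rule monoY[OF gS T Sgh_T H])
      have zm: "- ?Zm = \<sigma> * inner (?X1 + ?Y1 - c) (?Y1 - ?Y0) + (\<tau> - 1) * \<sigma> * inner (?X0 + ?Y0 - c) (?Y1 - ?Y0)"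
        by (rule z_mono) (rule zstep)
      have a0: "0 \<le> \<alpha>"
      proof -
        have "0 < 1 + 1 / \<tau>" using \<tau>(1) by (simp add: add_pos_pos)
        hence "0 < min (1 + \<tau>) (1 + 1 / \<tau>)" using \<tau>(1) by simp
        hence "0 < \<tau> / min (1 + \<tau>) (1 + 1 / \<tau>)" using \<tau>(1) by simp
        thus ?thesis using \<alpha>(1) by linarith
      qed
      have am: "\<alpha> * (\<sigma> * inner (?X1 + ?Y1 - c) (?Y1 - ?Y0) + (\<tau> - 1) * \<sigma> * inner (?X0 + ?Y0 - c) (?Y1 - ?Y0))
          \<le> \<alpha> * ((qf (\<lambda>w. Sgh w + T w) (?y0 - ?ym) - qf (\<lambda>w. Sgh w + T w) (?y1 - ?y0)) / 2)"
      proof (rule mult_left_mono[OF _ a0])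
        show "\<sigma> * inner (?X1 + ?Y1 - c) (?Y1 - ?Y0) + (\<tau> - 1) * \<sigma> * inner (?X0 + ?Y0 - c) (?Y1 - ?Y0)
          \<le> (qf (\<lambda>w. Sgh w + T w) (?y0 - ?ym) - qf (\<lambda>w. Sgh w + T w) (?y1 - ?y0)) / 2"
          using mono zm by argo
      qed
      note sc0 = scalar_ineq[OF \<tau>(1) \<sigma> \<alpha>(2) \<alpha>(1), where P = "?X1 + ?Y1 - c" and Q = "?X0 + ?Y0 - c" and b = "?Y1 - ?Y0"]
      have ee: "?X1 + ?Y1 - c - (?X0 + ?Y0 - c) - (?Y1 - ?Y0) = ?X1 - ?X0" by (simp add: algebra_simps)
      note sc = sc0[unfolded ee]
      have lhs: "LH (Suc j) = (px (Suc (Suc j)) - Pu + inner (?x1 - u) (df u)) + (qy (Suc (Suc j)) - Qv + inner (?y1 - v) (dg v))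
          + (inner (?X1 - ?U) w + inner (?Y1 - ?V) w + inner (?z0 + \<sigma> *\<^sub>R (?X1 + ?Y1 - c) - w) (- (?U + ?V - c)))"
        unfolding LH_def
        by (simp add: inner_add_right adjoint_clauses(2)[OF A, symmetric] adjoint_clauses(2)[OF B, symmetric]
            linear_diff[OF lA] linear_diff[OF lB] algebra_simps)
      have rhs: "\<Psi> (Suc j) - \<Psi> (Suc (Suc j)) =
          ((norm (?z0 - w))\<^sup>2 / (\<tau> * \<sigma>) - (norm (?z0 + (\<tau> * \<sigma>) *\<^sub>R (?X1 + ?Y1 - c) - w))\<^sup>2 / (\<tau> * \<sigma>))
          + (qf (\<lambda>w. Sfh w + S w) (?x0 - u) - qf (\<lambda>w. Sfh w + S w) (?x1 - u))
          + (qf (\<lambda>w. Sgh w + T w) (?y0 - v) - qf (\<lambda>w. Sgh w + T w) (?y1 - v))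
          + \<sigma> * ((norm (?U + ?Y0 - c))\<^sup>2 - (norm (?U + ?Y1 - c))\<^sup>2)
          + \<alpha> * (qf (\<lambda>w. Sgh w + T w) (?y0 - ?ym) - qf (\<lambda>w. Sgh w + T w) (?y1 - ?y0))
          + cc * \<sigma> * ((norm (?X0 + ?Y0 - c))\<^sup>2 - (norm (?X1 + ?Y1 - c))\<^sup>2)"
        unfolding \<Psi>_def \<Phi>_def \<xi>_def zs by (simp add: algebra_simps)
      show ?thesis unfolding lhs rhs using cx cy zid hf mg am sc unfolding cc_def[symmetric] by argo

    qed
    have psdPg: "0 \<le> qf (\<lambda>b. Sgh b + T b) d" for d
    proof -
      have "0 \<le> qf (\<lambda>v. (1/2) *\<^sub>R Sgh v + T v) d" using Sgh_T by (simp add: psd_def)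
      moreover have "0 \<le> qf (\<lambda>u. Sgh u - Sg u) d" using gS by (simp add: sandwich_def psd_def)
      moreover have "0 \<le> qf Sg d" using gS by (simp add: sandwich_def psd_def)
      ultimately show ?thesis unfolding qf_def by (simp add: inner_add_right inner_diff_right)
    qed
    have psdPf: "0 \<le> qf (\<lambda>a. Sfh a + S a) d" for d using Sfh_S by (simp add: psd_def)
    have a0: "0 \<le> \<alpha>"
    proof -
      have "0 < 1 + 1 / \<tau>" using \<tau>(1) by (simp add: add_pos_pos)
      hence "0 < min (1 + \<tau>) (1 + 1 / \<tau>)" using \<tau>(1) by simp
      hence "0 < \<tau> / min (1 + \<tau>) (1 + 1 / \<tau>)" using \<tau>(1) by simp
      thus ?thesis using \<alpha>(1) by linarith
    qed
    have cc0: "0 \<le> cc"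
    proof -
      have m0: "0 \<le> min \<tau> (1 / \<tau>)" using \<tau>(1) by simp
      have m1: "min \<tau> (1 / \<tau>) \<le> 1"
      proof (cases "\<tau> \<le> 1")
        case True thus ?thesis by simp
      next
        case False
        hence "1 / \<tau> \<le> 1" by simp
        thus ?thesis by (simp add: min_le_iff_disj)
      qed
      have "\<alpha> * min \<tau> (1 / \<tau>) \<le> 1 * 1" by (rule mult_mono) (use \<alpha>(2) a0 m0 m1 in auto)
      thus ?thesis by (simp add: cc_def)
    qed
    have Psi0: "0 \<le> \<Psi> i" for i
    proof -
      have "0 \<le> (norm (z i - w))\<^sup>2 / (\<tau> * \<sigma>)" using \<tau>(1) \<sigma> by simp
      moreover have "0 \<le> \<sigma> * (norm (adjoint A u + adjoint B (y i) - c))\<^sup>2" using \<sigma> by simp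
      moreover have "0 \<le> \<alpha> * \<xi> i" unfolding \<xi>_def using a0 psdPg by simp
      moreover have "0 \<le> cc * \<sigma> * (norm (adjoint A (x i) + adjoint B (y i) - c))\<^sup>2" using cc0 \<sigma> by simp
      ultimately show ?thesis unfolding \<Psi>_def \<Phi>_def using psdPf[of "x i - u"] psdPg[of "y i - v"] by linarith
    qed
    have tel: "(\<Sum>i=1..n. LH i) \<le> (\<Psi> 1 - \<Psi> (Suc n)) / 2" for n
    proof (induction n)
      case 0 then show ?case by simp
    next
      case (Suc n)
      have "(\<Sum>i=1..Suc n. LH i) = (\<Sum>i=1..n. LH i) + LH (Suc n)" by simp
      also have "\<dots> \<le> (\<Psi> 1 - \<Psi> (Suc n)) / 2 + (\<Psi> (Suc n) - \<Psi> (Suc (Suc n))) / 2"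
        using Suc.IH step[of n] by linarith
      also have "\<dots> = (\<Psi> 1 - \<Psi> (Suc (Suc n))) / 2" by argo
      finally show ?case .
    qed
    have S1: "(\<Sum>i=1..k. LH i) \<le> \<Psi> 1 / 2" using tel[of k] Psi0[of "Suc k"] by argo
    have kpos: "real k > 0" using k by simp
    let ?xh = "(1 / real k) *\<^sub>R (\<Sum>i=1..k. x (i + 1))" and ?yh = "(1 / real k) *\<^sub>R (\<Sum>i=1..k. y (i + 1))"
      and ?zh = "(1 / real k) *\<^sub>R (\<Sum>i=1..k. (z (i + 1 - 1) + \<sigma> *\<^sub>R (adjoint A (x (i + 1)) + adjoint B (y (i + 1)) - c)))"
    let ?Lin = "inner (?xh - u) (df u + A w) + inner (?yh - v) (dg v + B w) + inner (?zh - w) (- (adjoint A u + adjoint B v - c))"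
    have sx: "inner (?xh - u) (df u + A w) = (1 / real k) * (\<Sum>i=1..k. inner (x (i + 1) - u) (df u + A w))"
      by (rule avg_inner[OF k])
    have sy: "inner (?yh - v) (dg v + B w) = (1 / real k) * (\<Sum>i=1..k. inner (y (i + 1) - v) (dg v + B w))"
      by (rule avg_inner[OF k])
    have sz: "inner (?zh - w) (- (adjoint A u + adjoint B v - c)) = (1 / real k) * (\<Sum>i=1..k.
        inner (z (i + 1 - 1) + \<sigma> *\<^sub>R (adjoint A (x (i + 1)) + adjoint B (y (i + 1)) - c) - w) (- (adjoint A u + adjoint B v - c)))"
      by (rule avg_inner[OF k])
    have sumLH: "(\<Sum>i=1..k. LH i) = (\<Sum>i=1..k. px (i + 1)) - real k * Pu + ((\<Sum>i=1..k. qy (i + 1)) - real k * Qv)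
        + ((\<Sum>i=1..k. inner (x (i + 1) - u) (df u + A w)) + (\<Sum>i=1..k. inner (y (i + 1) - v) (dg v + B w))
           + (\<Sum>i=1..k. inner (z (i + 1 - 1) + \<sigma> *\<^sub>R (adjoint A (x (i + 1)) + adjoint B (y (i + 1)) - c) - w) (- (adjoint A u + adjoint B v - c))))"
      unfolding LH_def by (simp add: sum.distrib sum_subtractf)
    have avgLH: "(1 / real k) * (\<Sum>i=1..k. LH i) = ((1 / real k) * (\<Sum>i=1..k. px (i + 1)) - Pu)
         + ((1 / real k) * (\<Sum>i=1..k. qy (i + 1)) - Qv) + ?Lin"
      unfolding sumLH sx sy sz using kpos by (simp add: field_simps)
    have keyr: "((1 / real k) * (\<Sum>i=1..k. px (i + 1)) - Pu) + ((1 / real k) * (\<Sum>i=1..k. qy (i + 1)) - Qv) + ?Lin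
        \<le> \<Psi> 1 / (2 * real k)"
    proof -
      have "(1 / real k) * (\<Sum>i=1..k. LH i) \<le> (1 / real k) * (\<Psi> 1 / 2)"
        by (rule mult_left_mono[OF S1]) (use kpos in simp)
      also have "(1 / real k) * (\<Psi> 1 / 2) = \<Psi> 1 / (2 * real k)" by simp
      finally show ?thesis unfolding avgLH .
    qed
    have jx: "p ?xh \<le> ereal ((1 / real k) * (\<Sum>i=1..k. px (i + 1)))"
      by (rule jensen_avg[OF pcvx k]) (rule px)
    have jy: "q ?yh \<le> ereal ((1 / real k) * (\<Sum>i=1..k. qy (i + 1)))"
      by (rule jensen_avg[OF qcvx k]) (rule qy)
    obtain PX where PX: "p ?xh = ereal PX" using jx pnm[of ?xh] by (cases "p ?xh") auto
    obtain QY where QY: "q ?yh = ereal QY" using jy qnm[of ?yh] by (cases "q ?yh") auto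
    have PXl: "PX \<le> (1 / real k) * (\<Sum>i=1..k. px (i + 1))" using jx unfolding PX by simp
    have QYl: "QY \<le> (1 / real k) * (\<Sum>i=1..k. qy (i + 1))" using jy unfolding QY by simp
    have Psi1: "\<Psi> 1 = ((norm (z 1 - w))\<^sup>2 / (\<tau> * \<sigma>) + qf (\<lambda>a. Sfh a + S a) (x 1 - u)
                 + qf (\<lambda>b. Sgh b + T b) (y 1 - v) + \<sigma> * (norm (adjoint A u + adjoint B (y 1) - c))\<^sup>2)
               + (1 - \<alpha> * min \<tau> (1 / \<tau>)) * \<sigma> * (norm (adjoint A (x 1) + adjoint B (y 1) - c))\<^sup>2
               + \<alpha> * qf (\<lambda>b. Sgh b + T b) (y 1 - y 0)"
      unfolding \<Psi>_def \<Phi>_def \<xi>_def cc_def by simp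
    have "PX + QY - (Pu + Qv) + ?Lin \<le> \<Psi> 1 / (2 * real k)" using keyr PXl QYl by argo
    thus ?thesis unfolding PX QY Pu Qv Psi1[symmetric] by simp
  qed
  show ?thesis unfolding Let_def by (intro allI main)
qed

end
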